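(* For every $A\in\mathcal A$ there exists $p\in\mathcal K$ such that $$\mathcal I_0(p):=\int_0^T\Big(1-\sqrt{1-|\dot p(t)|^2}\Big)dt+\int_0^T\dot p(t)\cdot A(t,p(t))\,dt<0.$$
   Context: $T>0$ fixed. $\mathcal A$ is the set of $A\in\mathcal C^1(\mathbb R^4;\mathbb R^3)$, $A=A(t,x)$, $T$-periodic in $t$, with $\partial_tA\not\equiv0$ and $\lim_{|x|\to\infty}(|\partial_tA(t,x)|+|\nabla A(t,x)|)=0$ uniformly in $t$ ($\nabla A$ = spatial Jacobian). $\mathcal W$ = Lipschitz $T$-periodic $q:\mathbb R\to\mathbb R^3$; $\mathcal K=\{q\in\mathcal W:\|\dot q\|_\infty\le1\}$. *)

theory Defs
  imports "HOL-Analysis.Analysis"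
begin

definition C1_fun :: "(real \<times> (real^3) \<Rightarrow> real^3) \<Rightarrow> bool" where
  "C1_fun A \<longleftrightarrow> (\<exists>A'. (\<forall>z. (A has_derivative blinfun_apply (A' z)) (at z)) \<and> continuous_on UNIV A')"

definition dt :: "(real \<times> (real^3) \<Rightarrow> real^3) \<Rightarrow> real \<Rightarrow> real^3 \<Rightarrow> real^3" where
  "dt A t x = frechet_derivative A (at (t, x)) (1, 0)"

definition grad_x :: "(real \<times> (real^3) \<Rightarrow> real^3) \<Rightarrow> real \<Rightarrow> real^3 \<Rightarrow> (real^3 \<Rightarrow> real^3)" where
  "grad_x A t x = (\<lambda>v. frechet_derivative A (at (t, x)) (0, v))"

definition class_A :: "real \<Rightarrow> (real \<times> (real^3) \<Rightarrow> real^3) set" where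
  "class_A T = {A. C1_fun A
      \<and> (\<forall>t x. A (t + T, x) = A (t, x))
      \<and> (\<exists>t x. dt A t x \<noteq> 0)
      \<and> (\<forall>e>0. \<exists>R. \<forall>t x. norm x \<ge> R \<longrightarrow> norm (dt A t x) + onorm (grad_x A t x) < e)}"

definition class_W :: "real \<Rightarrow> (real \<Rightarrow> real^3) set" where
  "class_W T = {q. (\<exists>L. L-lipschitz_on UNIV q) \<and> (\<forall>t. q (t + T) = q t)}"

definition class_K :: "real \<Rightarrow> (real \<Rightarrow> real^3) set" where
  "class_K T = {q \<in> class_W T. AE t in lborel. norm (vector_derivative q (at t)) \<le> 1}"

definition I0 :: "real \<Rightarrow> (real \<times> (real^3) \<Rightarrow> real^3) \<Rightarrow> (real \<Rightarrow> real^3) \<Rightarrow> real" where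
  "I0 T A p =
     (LINT t:{0..T}|lborel. 1 - sqrt (1 - (norm (vector_derivative p (at t)))\<^sup>2))
   + (LINT t:{0..T}|lborel. vector_derivative p (at t) \<bullet> A (t, p t))"

end

theory Submission
  imports Defs
begin

lemma periodic_int:
  fixes f :: "real \<Rightarrow> 'a"
  assumes "\<And>t. f (t + T) = f t"
  shows "f (t + of_int n * T) = f t"
proof (induction n rule: int_induct[where k=0])
  case base then show ?case by simp
next
  case (step1 i)
  have "f (t + of_int (i+1) * T) = f ((t + of_int i * T) + T)" by (simp add: algebra_simps)
  then show ?case using assms step1 by simp
next
  case (step2 i)
  have "f (t + of_int i * T) = f ((t + of_int (i - 1) * T) + T)" by (simp add: algebra_simps)
  then show ?case using assms step2 by simp
qed

lemma periodic_reduce: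
  fixes f :: "real \<Rightarrow> 'a"
  assumes "\<And>t. f (t + T) = f t" "T > 0"
  shows "\<exists>s\<in>{0..T}. f t = f s"
proof -
  define n where "n = floor (t / T)"
  have "of_int n \<le> t / T" "t / T < of_int n + 1" unfolding n_def by linarith+
  then have 1: "of_int n * T \<le> t" "t < (of_int n + 1) * T" using assms(2)
    by (simp_all add: field_simps)
  have "f (t + of_int (-n) * T) = f t" using periodic_int[of f T, OF assms(1)] by blast
  moreover have "t + of_int (-n) * T \<in> {0..T}" using 1 by (auto simp: algebra_simps)
  ultimately show ?thesis by metis
qed

theorem mainTheorem11:
  fixes T :: real and A :: "real \<times> (real^3) \<Rightarrow> real^3"
  assumes "T > 0" and "A \<in> class_A T"
  shows "\<exists>p \<in> class_K T. I0 T A p < 0"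
proof -
  have T0: "T > 0" by fact
  obtain A' where dA: "\<And>z. (A has_derivative blinfun_apply (A' z)) (at z)"
    using assms(2) unfolding class_A_def C1_fun_def by blast
  have per: "\<And>t x. A (t + T, x) = A (t, x)"
    using assms(2) unfolding class_A_def by blast
  obtain t0 x0 where dt0: "dt A t0 x0 \<noteq> 0"
    using assms(2) unfolding class_A_def by blast
  have contA: "continuous_on UNIV A"
    using dA has_derivative_continuous continuous_at_imp_continuous_on by blast
  define a where "a = (\<lambda>t. A (t, x0))"
  have conta: "continuous_on UNIV a"
    unfolding a_def by (intro continuous_on_compose2[OF contA] continuous_intros) auto
  have pera: "\<And>t. a (t + T) = a t" unfolding a_def using per by simp
  have nonconst: "\<exists>t1\<in>{0..T}. a t1 \<noteq> a 0"
  proof (rule ccontr)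
    assume "\<not> ?thesis"
    then have c: "\<And>t. a t = a 0" using periodic_reduce[of a T, OF pera T0] by metis
    have d1: "(a has_derivative (\<lambda>h. blinfun_apply (A' (t0, x0)) (h, 0))) (at t0)"
    proof -
      have "((\<lambda>t. (t, x0)) has_derivative (\<lambda>h. (h, 0))) (at t0)"
        by (auto intro!: derivative_eq_intros)
      from has_derivative_compose[OF this dA[of "(t0,x0)"]] show ?thesis
        unfolding a_def o_def by simp
    qed
    have d2: "(a has_derivative (\<lambda>h. 0)) (at t0)"
      using c has_derivative_const[of "a 0"] by (metis (no_types) ext)
    have "(\<lambda>h. blinfun_apply (A' (t0, x0)) (h, 0)) = (\<lambda>h. 0)"
      using has_derivative_unique[OF d1 d2] .
    then have "blinfun_apply (A' (t0, x0)) (1, 0) = 0" by metis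
    moreover have "dt A t0 x0 = blinfun_apply (A' (t0, x0)) (1, 0)"
      unfolding dt_def using frechet_derivative_at[OF dA[of "(t0,x0)"]] by simp
    ultimately show False using dt0 by simp
  qed
  define m where "m = (1/T) *\<^sub>R integral {0..T} a"
  define g where "g = (\<lambda>t. a t - m)"
  have contg: "continuous_on UNIV g" unfolding g_def by (intro continuous_intros conta)
  have contg': "\<And>S. continuous_on S g" using contg continuous_on_subset by blast
  have perg: "\<And>t. g (t + T) = g t" unfolding g_def using pera by simp
  have inta: "a integrable_on {0..T}"
    using conta continuous_on_subset integrable_continuous_real by blast
  have intg: "g integrable_on {0..T}"
    using contg' integrable_continuous_real by blast
  have intg0: "integral {0..T} g = 0"
  proof -
    have "integral {0..T} g = integral {0..T} a - integral {0..T} (\<lambda>t. m)"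
      unfolding g_def by (rule integral_diff[OF inta]) (simp add: integrable_const_ivl)
    also have "\<dots> = 0" using T0 unfolding m_def by simp
    finally show ?thesis .
  qed
  define S where "S = integral {0..T} (\<lambda>t. (norm (g t))\<^sup>2)"
  have contS: "continuous_on {0..T} (\<lambda>t. (norm (g t))\<^sup>2)"
    by (intro continuous_intros contg')
  have Spos: "S > 0"
  proof -
    have "S \<ge> 0" unfolding S_def
      by (intro integral_nonneg integrable_continuous_real contS) simp
    moreover have "S \<noteq> 0"
    proof
      assume "S = 0"
      then have z: "\<forall>t\<in>{0..T}. (norm (g t))\<^sup>2 = 0"
        using integral_eq_0_iff[OF contS T0] unfolding S_def by simp
      obtain t1 where "t1 \<in> {0..T}" "a t1 \<noteq> a 0" using nonconst by blast
      moreover have "0 \<in> {0..T}" using T0 by simp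
      ultimately show False using z unfolding g_def by simp
    qed
    ultimately show ?thesis by simp
  qed
  obtain G where G0: "G > 0" and Gb: "\<And>t. norm (g t) \<le> G"
  proof -
    have "compact (g ` {0..T})" by (intro compact_continuous_image contg') simp
    then obtain B where B: "B > 0" "\<forall>y\<in>g ` {0..T}. norm y \<le> B"
      using compact_imp_bounded bounded_pos by metis
    have "norm (g t) \<le> B" for t
      using periodic_reduce[of g T t, OF perg T0] B by force
    then show ?thesis using that B by blast
  qed
  define w :: "real \<Rightarrow> real^3" where "w = (\<lambda>t. LBINT s=(0::real)..t. g s)"
  have dw: "\<And>t. (w has_vector_derivative g t) (at t)"
  proof -
    fix t :: real
    have i1: "-\<bar>t\<bar>-1 \<le> (0::real)" "(0::real) \<le> \<bar>t\<bar>+1" "-\<bar>t\<bar>-1 \<le> t" "t \<le> \<bar>t\<bar>+1" by auto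
    have "(w has_vector_derivative g t) (at t within {-\<bar>t\<bar>-1..\<bar>t\<bar>+1})"
      using interval_integral_FTC2[OF i1(1,2) contg' i1(3,4)] unfolding w_def .
    moreover have "at t within {-\<bar>t\<bar>-1..\<bar>t\<bar>+1} = at t"
      by (rule at_within_Icc_at) auto
    ultimately show "(w has_vector_derivative g t) (at t)" by simp
  qed
  have contw: "continuous_on UNIV w"
    using has_vector_derivative_continuous[OF dw] by (simp add: continuous_at_imp_continuous_on)
  have w0: "w 0 = 0" unfolding w_def by simp
  have wT: "w T = 0"
  proof -
    have "w T = integral {0..T} g" unfolding w_def
      using T0 by (intro interval_integral_eq_integral borel_integrable_atLeastAtMost' contg') simp
    then show ?thesis using intg0 by simp
  qed
  have perw: "\<And>t. w (t + T) = w t"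
  proof -
    have "((\<lambda>t. w (t + T) - w t) has_derivative (\<lambda>h. 0)) (at t within UNIV)" for t
    proof -
      have "((\<lambda>t. t + T) has_vector_derivative 1) (at t)"
        by (auto intro!: derivative_eq_intros)
      from vector_diff_chain_at[OF this dw[of "t + T"]]
      have "((\<lambda>t. w (t + T)) has_vector_derivative g (t + T)) (at t)" by (simp add: o_def)
      then have "((\<lambda>t. w (t + T) - w t) has_vector_derivative (g (t + T) - g t)) (at t)"
        using dw[of t] by (intro derivative_intros)
      then show ?thesis using perg[of t] by (simp add: has_vector_derivative_def)
    qed
    from has_derivative_zero_constant[OF convex_UNIV this]
    obtain c where "\<And>t. w (t + T) - w t = c" by blast
    from this[of 0] this have "\<And>t. w (t + T) - w t = 0" using w0 wT by simp
    then show "\<And>t. w (t + T) = w t" by simp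
  qed
  obtain Wb where Wb0: "Wb > 0" and Wbb: "\<And>t. t \<in> {0..T} \<Longrightarrow> norm (w t) \<le> Wb"
  proof -
    have "compact (w ` {0..T})" by (intro compact_continuous_image continuous_on_subset[OF contw]) auto
    then obtain B where B: "B > 0" "\<forall>y\<in>w ` {0..T}. norm y \<le> B"
      using compact_imp_bounded bounded_pos by metis
    then show ?thesis using that by blast
  qed
  define K where "K = {0..T} \<times> cball x0 1"
  have "uniformly_continuous_on K A" unfolding K_def
    by (intro compact_uniformly_continuous continuous_on_subset[OF contA] compact_Times) auto
  define \<eta> where "\<eta> = S / (4 * (T * G + 1))"
  have eta0: "\<eta> > 0" unfolding \<eta>_def using Spos T0 G0 by (intro divide_pos_pos) (auto intro!: add_pos_pos mult_pos_pos)
  obtain \<delta> where d0: "\<delta> > 0" and dK: "\<And>z z'. z \<in> K \<Longrightarrow> z' \<in> K \<Longrightarrow> dist z' z < \<delta> \<Longrightarrow> dist (A z') (A z) < \<eta>"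
    using \<open>uniformly_continuous_on K A\<close> eta0 unfolding uniformly_continuous_on_def by metis
  define \<epsilon> where "\<epsilon> = min (1/2) (min (1/G) (min \<delta> 1 / (2*Wb)))"
  have e0: "\<epsilon> > 0" unfolding \<epsilon>_def using G0 d0 Wb0 by simp
  have e1: "\<epsilon> \<le> 1/2" unfolding \<epsilon>_def by simp
  have eG: "\<epsilon> * G \<le> 1"
  proof -
    have "\<epsilon> \<le> 1/G" unfolding \<epsilon>_def by simp
    then show ?thesis using G0 by (simp add: field_simps)
  qed
  have eW: "\<epsilon> * Wb \<le> min \<delta> 1 / 2"
  proof -
    have "\<epsilon> \<le> min \<delta> 1 / (2*Wb)" unfolding \<epsilon>_def by linarith
    then show ?thesis using Wb0 by (simp add: field_simps)
  qed
  define p where "p = (\<lambda>t. x0 - \<epsilon> *\<^sub>R w t)"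
  have dp: "\<And>t. (p has_vector_derivative (- \<epsilon> *\<^sub>R g t)) (at t)"
    unfolding p_def using dw by (auto intro!: derivative_eq_intros)
  have vdp: "\<And>t. vector_derivative p (at t) = - \<epsilon> *\<^sub>R g t"
    using dp vector_derivative_at by blast
  have pK: "p \<in> class_K T"
  proof -
    have "(\<epsilon> * G)-lipschitz_on UNIV p"
    proof (rule bounded_derivative_imp_lipschitz)
      show "(p has_derivative (\<lambda>h. h *\<^sub>R (- \<epsilon> *\<^sub>R g x))) (at x within UNIV)" for x
        using dp[of x] by (simp add: has_vector_derivative_def)
      show "onorm (\<lambda>h. h *\<^sub>R (- \<epsilon> *\<^sub>R g x)) \<le> \<epsilon> * G" for x
      proof -
        have "onorm (\<lambda>h. h *\<^sub>R (- \<epsilon> *\<^sub>R g x)) = onorm (\<lambda>h::real. h) * norm (- \<epsilon> *\<^sub>R g x)"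
          by (rule onorm_scaleR_left) (rule bounded_linear_ident)
        also have "\<dots> = \<epsilon> * norm (g x)" using e0 by (simp add: onorm_id)
        also have "\<dots> \<le> \<epsilon> * G" using e0 Gb[of x] by simp
        finally show ?thesis .
      qed
    qed (use e0 G0 in auto)
    moreover have "\<And>t. p (t + T) = p t" unfolding p_def using perw by simp
    moreover have "AE t in lborel. norm (vector_derivative p (at t)) \<le> 1"
    proof (rule AE_I2)
      fix t
      have "norm (vector_derivative p (at t)) = \<epsilon> * norm (g t)" using vdp e0 by simp
      also have "\<dots> \<le> \<epsilon> * G" using e0 Gb[of t] by simp
      finally show "norm (vector_derivative p (at t)) \<le> 1" using eG by simp
    qed
    ultimately show ?thesis unfolding class_K_def class_W_def by blast
  qed
  have contp: "continuous_on UNIV p"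
    using has_vector_derivative_continuous[OF dp] by (simp add: continuous_at_imp_continuous_on)
  define f1 where "f1 = (\<lambda>t. 1 - sqrt (1 - (norm (- \<epsilon> *\<^sub>R g t))\<^sup>2))"
  define f2 where "f2 = (\<lambda>t. (- \<epsilon> *\<^sub>R g t) \<bullet> A (t, p t))"
  have cf1: "continuous_on {0..T} f1" unfolding f1_def by (intro continuous_intros contg')
  have cAp: "continuous_on {0..T} (\<lambda>t. A (t, p t))"
    by (intro continuous_on_compose2[OF contA] continuous_intros continuous_on_subset[OF contp]) auto
  have cf2: "continuous_on {0..T} f2" unfolding f2_def by (intro continuous_intros contg' cAp)
  have I0eq: "I0 T A p = integral {0..T} f1 + integral {0..T} f2"
  proof -
    have "I0 T A p = (LINT t:{0..T}|lborel. f1 t) + (LINT t:{0..T}|lborel. f2 t)"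
      unfolding I0_def vdp f1_def f2_def by simp
    also have "\<dots> = integral {0..T} f1 + integral {0..T} f2"
      using set_borel_integral_eq_integral(2)[OF borel_integrable_atLeastAtMost'[OF cf1]]
        set_borel_integral_eq_integral(2)[OF borel_integrable_atLeastAtMost'[OF cf2]] by simp
    finally show ?thesis .
  qed
  have intS: "(\<lambda>t. (norm (g t))\<^sup>2) integrable_on {0..T}" using contS integrable_continuous_real by blast
  have J1: "integral {0..T} f1 \<le> \<epsilon>\<^sup>2 * S"
  proof -
    have "integral {0..T} f1 \<le> integral {0..T} (\<lambda>t. \<epsilon>\<^sup>2 * (norm (g t))\<^sup>2)"
    proof (rule integral_le)
      show "f1 integrable_on {0..T}" using cf1 integrable_continuous_real by blast
      show "(\<lambda>t. \<epsilon>\<^sup>2 * (norm (g t))\<^sup>2) integrable_on {0..T}" using integrable_continuous_real continuous_on_mult[OF continuous_on_const contS] by blast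
      fix t
      define y where "y = (\<epsilon> * norm (g t))\<^sup>2"
      have y0: "0 \<le> y" unfolding y_def by simp
      have "\<epsilon> * norm (g t) \<le> 1" using Gb[of t] eG e0 by (meson mult_left_mono order_trans less_imp_le)
      then have y1: "y \<le> 1" unfolding y_def using e0 by (simp add: power_le_one)
      have "(1 - y)\<^sup>2 \<le> 1 - y" using y0 y1 by (simp add: power2_eq_square mult_le_cancel_right1 mult_left_le)
      then have "1 - y \<le> sqrt (1 - y)" by (rule real_le_rsqrt)
      moreover have "f1 t = 1 - sqrt (1 - y)" unfolding f1_def y_def using e0 by (simp add: power_mult_distrib)
      moreover have "\<epsilon>\<^sup>2 * (norm (g t))\<^sup>2 = y" unfolding y_def by (simp add: power_mult_distrib)
      ultimately show "f1 t \<le> \<epsilon>\<^sup>2 * (norm (g t))\<^sup>2" by simp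
    qed
    also have "\<dots> = \<epsilon>\<^sup>2 * S" unfolding S_def by simp
    finally show ?thesis .
  qed
  have conta': "\<And>S. continuous_on S a" using conta continuous_on_subset by blast
  have ga: "integral {0..T} (\<lambda>t. g t \<bullet> a t) = S"
  proof -
    have eq: "\<And>t. g t \<bullet> a t = (norm (g t))\<^sup>2 + g t \<bullet> m"
      unfolding g_def by (simp add: power2_norm_eq_inner algebra_simps)
    have im: "(\<lambda>t. g t \<bullet> m) integrable_on {0..T}"
      by (intro integrable_continuous_real continuous_intros contg')
    have "integral {0..T} (\<lambda>t. g t \<bullet> m) = integral {0..T} g \<bullet> m"
      using integral_linear[OF intg bounded_linear_inner_left[of m]] by (simp add: o_def)
    then have "integral {0..T} (\<lambda>t. g t \<bullet> m) = 0" using intg0 by simp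
    then show ?thesis unfolding eq S_def using integral_add[OF intS im] by simp
  qed
  have J2: "integral {0..T} f2 \<le> - \<epsilon> * S + \<epsilon> * G * \<eta> * T"
  proof -
    have "integral {0..T} f2 \<le> integral {0..T} (\<lambda>t. - \<epsilon> * (g t \<bullet> a t) + \<epsilon> * G * \<eta>)"
    proof (rule integral_le)
      show "f2 integrable_on {0..T}" using cf2 integrable_continuous_real by blast
      show "(\<lambda>t. - \<epsilon> * (g t \<bullet> a t) + \<epsilon> * G * \<eta>) integrable_on {0..T}"
        by (intro integrable_continuous_real continuous_intros contg' conta')
      fix t assume t: "t \<in> {0..T}"
      have np: "norm (p t - x0) \<le> 1/2"
      proof -
        have "norm (p t - x0) = \<epsilon> * norm (w t)" unfolding p_def using e0 by simp
        also have "\<dots> \<le> \<epsilon> * Wb" using Wbb[OF t] e0 by simp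
        also have "\<dots> \<le> 1/2" using eW by simp
        finally show ?thesis .
      qed
      have np2: "norm (p t - x0) < \<delta>"
      proof -
        have "norm (p t - x0) = \<epsilon> * norm (w t)" unfolding p_def using e0 by simp
        also have "\<dots> \<le> \<epsilon> * Wb" using Wbb[OF t] e0 by simp
        also have "\<dots> < \<delta>" using eW d0 by simp
        finally show ?thesis .
      qed
      have z1: "(t, x0) \<in> K" unfolding K_def using t by simp
      have z2: "(t, p t) \<in> K" unfolding K_def using t np by (simp add: dist_norm norm_minus_commute)
      have "dist (t, p t) (t, x0) < \<delta>" using np2 by (simp add: dist_Pair_Pair dist_norm)
      from dK[OF z1 z2 this] have dd: "norm (A (t, p t) - a t) < \<eta>" unfolding a_def by (simp add: dist_norm)
      have "\<bar>g t \<bullet> (A (t, p t) - a t)\<bar> \<le> norm (g t) * norm (A (t, p t) - a t)"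
        by (rule Cauchy_Schwarz_ineq2)
      also have "\<dots> \<le> G * \<eta>" using Gb[of t] dd G0 by (intro mult_mono) auto
      finally have "- (g t \<bullet> (A (t, p t) - a t)) \<le> G * \<eta>" by simp
      then have "\<epsilon> * (- (g t \<bullet> (A (t, p t) - a t))) \<le> \<epsilon> * (G * \<eta>)" using e0 by (intro mult_left_mono) auto
      moreover have "f2 t = - \<epsilon> * (g t \<bullet> a t) + \<epsilon> * (- (g t \<bullet> (A (t, p t) - a t)))"
        unfolding f2_def by (simp add: inner_diff_right algebra_simps)
      ultimately show "f2 t \<le> - \<epsilon> * (g t \<bullet> a t) + \<epsilon> * G * \<eta>" by (simp add: mult.assoc)
    qed
    also have "\<dots> = - \<epsilon> * S + \<epsilon> * G * \<eta> * T"
    proof -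
      have i1: "(\<lambda>t. - \<epsilon> * (g t \<bullet> a t)) integrable_on {0..T}"
        by (intro integrable_continuous_real continuous_intros contg' conta')
      have "integral {0..T} (\<lambda>t. - \<epsilon> * (g t \<bullet> a t) + \<epsilon> * G * \<eta>)
          = integral {0..T} (\<lambda>t. - \<epsilon> * (g t \<bullet> a t)) + integral {0..T} (\<lambda>t. \<epsilon> * G * \<eta>)"
        by (rule integral_add[OF i1]) (rule integrable_const_ivl)
      also have "\<dots> = - \<epsilon> * S + \<epsilon> * G * \<eta> * T" using ga T0 by simp
      finally show ?thesis .
    qed
    finally show ?thesis .
  qed
  have final: "\<epsilon>\<^sup>2 * S + (- \<epsilon> * S + \<epsilon> * G * \<eta> * T) < 0"
  proof -
    have pos: "4 * (T * G + 1) > 0" using T0 G0 by (auto intro!: add_pos_pos mult_pos_pos)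
    have "\<eta> * (4 * (T * G + 1)) = S" unfolding \<eta>_def using pos by simp
    then have "4 * (G * \<eta> * T) = S - 4 * \<eta>" by (simp add: algebra_simps)
    then have h1: "G * \<eta> * T < S / 4" using eta0 by simp
    have h2: "\<epsilon> * S \<le> S / 2" using e1 Spos by (simp add: mult_right_mono[of \<epsilon> "1/2" S, simplified])
    have "\<epsilon>\<^sup>2 * S + (- \<epsilon> * S + \<epsilon> * G * \<eta> * T) = \<epsilon> * (\<epsilon> * S - S + G * \<eta> * T)"
      by (simp add: power2_eq_square algebra_simps)
    moreover have "\<epsilon> * S - S + G * \<eta> * T < 0" using h1 h2 Spos by linarith
    ultimately show ?thesis using e0 by (simp add: mult_pos_neg)
  qed
  have "I0 T A p < 0" using I0eq J1 J2 final by linarith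
  then show ?thesis using pK by blast
qed

end
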